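(* Let $n\ge w\ge t\ge 1$ and $q,q'\ge 1$ be integers. Let $S\subset Q_{q*}^n$ be an $A(n,q,w,t)$ design. For each pair consisting of a codeword $a\in S$, whose non-$*$ entries in increasing order of position are $a^1,\dots,a^t$, and a word $(b_1,\dots,b_t)\in Q_{q'}^t$, form the word in $(Q_q\times Q_{q'})_*^n$ which has $*$ exactly where $a$ has $*$ and whose $j$-th non-$*$ entry (in increasing order of position) is $(a^j,b_j)$, $j=1,\dots,t$. Identifying $Q_q\times Q_{q'}$ with $Q_{qq'}$, let $U\subset Q_{qq'*}^n$ be the set of all such words. Then $U$ is an $A(n,qq',w,t)$ design.
   Context: For an integer $q\ge1$, $Q_q=\{0,1,\dots,q-1\}$ and $Q_{q*}=Q_q\cup\{*\}$ (for a finite alphabet $A$, $A_*=A\cup\{*\}$). The weight of a word $u\in Q_{q*}^n$ is $n$ minus the number of $*$ symbols in $u$. For $u,v\in Q_{q*}^n$ we say $u$ extends $v$ if $u_i=v_i$ for every position $i$ with $v_i\neq *$. An $A(n,q,w,t)$ design is a set $S$ of words of weight $t$ in $Q_{q*}^n$ such that every word of weight $w$ in $Q_{q*}^n$ extends exactly one element of $S$. *)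

theory Defs
  imports Main
begin

text \<open>Words of length n over Q_{q*}: lists of length n with entries None (the star)
  or Some a with a < q.\<close>
definition words :: "nat \<Rightarrow> nat \<Rightarrow> nat option list set" where
  "words q n = {u. length u = n \<and> (\<forall>x\<in>set u. case x of None \<Rightarrow> True | Some a \<Rightarrow> a < q)}"

definition weight :: "nat option list \<Rightarrow> nat" where
  "weight u = length (filter (\<lambda>x. x \<noteq> None) u)"

definition extends :: "nat option list \<Rightarrow> nat option list \<Rightarrow> bool" where
  "extends u v \<longleftrightarrow> length u = length v \<and> (\<forall>i < length v. v ! i \<noteq> None \<longrightarrow> u ! i = v ! i)"

definition is_design :: "nat \<Rightarrow> nat \<Rightarrow> nat \<Rightarrow> nat \<Rightarrow> nat option list set \<Rightarrow> bool" where
  "is_design n q w t S \<longleftrightarrow>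
     S \<subseteq> words q n \<and> (\<forall>s\<in>S. weight s = t) \<and>
     (\<forall>u\<in>words q n. weight u = w \<longrightarrow> (\<exists>!s. s \<in> S \<and> extends u s))"

text \<open>Identification of Q_q x Q_{q'} with Q_{qq'}: (x,y) is identified with x*q' + y.\<close>
definition pair_code :: "nat \<Rightarrow> nat \<Rightarrow> nat \<Rightarrow> nat" where
  "pair_code q' x y = x * q' + y"

fun merge :: "nat \<Rightarrow> nat option list \<Rightarrow> nat list \<Rightarrow> nat option list" where
  "merge q' [] bs = []"
| "merge q' (None # as) bs = None # merge q' as bs"
| "merge q' (Some x # as) bs = Some (pair_code q' x (hd bs)) # merge q' as (tl bs)"

definition product_design :: "nat \<Rightarrow> nat \<Rightarrow> nat option list set \<Rightarrow> nat option list set" where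
  "product_design q' t S =
     {merge q' a b | a b. a \<in> S \<and> length b = t \<and> (\<forall>y\<in>set b. y < q')}"

end

theory Submission
  imports Defs
begin

definition P :: "nat \<Rightarrow> nat option list \<Rightarrow> nat option list" where
  "P q' s = map (map_option (\<lambda>z. z div q')) s"

fun vals :: "nat \<Rightarrow> nat option list \<Rightarrow> nat list" where
  "vals q' [] = []"
| "vals q' (None # s) = vals q' s"
| "vals q' (Some z # s) = z mod q' # vals q' s"

lemma weight_simps[simp]: "weight [] = 0" "weight (None # s) = weight s"
  "weight (Some z # s) = Suc (weight s)"
  by (auto simp: weight_def)

lemma P_simps[simp]: "P q' [] = []" "P q' (None # s) = None # P q' s"
  "P q' (Some z # s) = Some (z div q') # P q' s"
  by (auto simp: P_def)

lemma length_P[simp]: "length (P q' s) = length s" by (simp add: P_def)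

lemma weight_P[simp]: "weight (P q' s) = weight s"
proof (induction s)
  case (Cons x s) then show ?case by (cases x) auto
qed simp

lemma P_merge: "0 < q' \<Longrightarrow> length b = weight a \<Longrightarrow> \<forall>y\<in>set b. y < q' \<Longrightarrow> P q' (merge q' a b) = a"
proof (induction q' a b rule: merge.induct)
  case (3 q' x as bs)
  then obtain c cs where bs: "bs = c # cs" by (cases bs) auto
  with 3 show ?case by (simp add: pair_code_def)
qed auto

lemma merge_vals: "merge q' (P q' s) (vals q' s) = s"
  by (induction q' s rule: vals.induct) (auto simp: pair_code_def)

lemma length_vals: "length (vals q' s) = weight s"
  by (induction q' s rule: vals.induct) auto

lemma vals_lt: "0 < q' \<Longrightarrow> \<forall>y\<in>set (vals q' s). y < q'"
  by (induction q' s rule: vals.induct) auto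

lemma words_P: "0 < q' \<Longrightarrow> s \<in> words (q * q') n \<longleftrightarrow> P q' s \<in> words q n"
  by (auto simp: words_def P_def div_less_iff_less_mult split: option.splits)

lemma extends_P: "extends u s \<Longrightarrow> extends (P q' u) (P q' s)"
  by (auto simp: extends_def P_def)

lemma char:
  assumes "0 < q'" "\<forall>a\<in>S. weight a = t"
  shows "product_design q' t S = {s. P q' s \<in> S}"
proof (intro set_eqI iffI)
  fix s assume "s \<in> product_design q' t S"
  then obtain a b where "s = merge q' a b" "a \<in> S" "length b = t" "\<forall>y\<in>set b. y < q'"
    by (auto simp: product_design_def)
  then show "s \<in> {s. P q' s \<in> S}" using assms P_merge by auto
next
  fix s assume "s \<in> {s. P q' s \<in> S}"
  hence "P q' s \<in> S" by simp
  moreover have "length (vals q' s) = t" using assms(2) \<open>P q' s \<in> S\<close> length_vals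
    by (metis weight_P)
  ultimately have "s = merge q' (P q' s) (vals q' s) \<and> P q' s \<in> S \<and> length (vals q' s) = t \<and> (\<forall>y\<in>set (vals q' s). y < q')"
    using merge_vals[of q' s] vals_lt[OF assms(1)] by simp
  then show "s \<in> product_design q' t S" unfolding product_design_def by blast
qed

theorem proposition3:
  fixes n q q' w t :: nat and S :: "nat option list set"
  assumes "1 \<le> t" and "t \<le> w" and "w \<le> n" and "1 \<le> q" and "1 \<le> q'"
    and "is_design n q w t S"
  shows "is_design n (q * q') w t (product_design q' t S)"
proof -
  have q: "0 < q'" using assms by simp
  have D: "S \<subseteq> words q n" "\<forall>s\<in>S. weight s = t"
    "\<forall>u\<in>words q n. weight u = w \<longrightarrow> (\<exists>!s. s \<in> S \<and> extends u s)"
    using assms(6) by (auto simp: is_design_def)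
  have C: "product_design q' t S = {s. P q' s \<in> S}" using char[OF q D(2)] .
  show ?thesis unfolding is_design_def C
  proof (intro conjI ballI impI)
    show "{s. P q' s \<in> S} \<subseteq> words (q * q') n" using D(1) words_P[OF q] by auto
  next
    fix s assume "s \<in> {s. P q' s \<in> S}" then show "weight s = t" using D(2) by (metis mem_Collect_eq weight_P)
  next
    fix u assume u: "u \<in> words (q * q') n" "weight u = w"
    hence "P q' u \<in> words q n" "weight (P q' u) = w" using words_P[OF q] by auto
    then obtain a where a: "a \<in> S" "extends (P q' u) a"
      and auni: "\<And>a'. a' \<in> S \<Longrightarrow> extends (P q' u) a' \<Longrightarrow> a' = a" using D(3) by metis
    define s where "s = map2 (\<lambda>x y. if x = None then None else y) a u"
    have len: "length a = length u" using a(2) by (simp add: extends_def)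
    have "P q' s = a"
    proof (rule nth_equalityI)
      show "length (P q' s) = length a" using len by (simp add: s_def)
      fix i assume "i < length (P q' s)"
      hence i: "i < length a" using len by (simp add: s_def)
      show "P q' s ! i = a ! i"
      proof (cases "a ! i")
        case None then show ?thesis using i len by (simp add: s_def P_def)
      next
        case (Some x)
        hence "P q' u ! i = a ! i" using a(2) i by (auto simp: extends_def)
        then show ?thesis using i len Some by (simp add: s_def P_def)
      qed
    qed
    moreover have "extends u s" using len by (auto simp: extends_def s_def)
    moreover have "s' = s" if "P q' s' \<in> S" "extends u s'" for s'
    proof -
      have "P q' s' = a" using auni that extends_P by blast
      have ls: "length s' = length u" using that(2) by (simp add: extends_def)
      show ?thesis
      proof (rule nth_equalityI)
        show "length s' = length s" using ls len by (simp add: s_def)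
        fix i assume "i < length s'"
        hence i: "i < length a" "i < length u" using ls len by auto
        have "P q' s' ! i = a ! i" using \<open>P q' s' = a\<close> by simp
        hence e: "(s' ! i = None) = (a ! i = None)" using i ls by (cases "s' ! i"; cases "a ! i") (auto simp: P_def)
        show "s' ! i = s ! i"
        proof (cases "s' ! i = None")
          case True then show ?thesis using e i by (simp add: s_def)
        next
          case False then show ?thesis using e i that(2) by (auto simp: s_def extends_def)
        qed
      qed
    qed
    ultimately show "\<exists>!s. s \<in> {s. P q' s \<in> S} \<and> extends u s"
      using a(1) by (intro ex1I[of _ s]) auto
  qed
qed

end
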